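(* Let $m\ge 1$ be an integer and let $p,p'\in[0,1]$ satisfy $|p-p'|<1$; put $q=1-p$, $q'=1-p'$. Let $\{S_n:n\ge 0\}$ be the Markov chain on $\mathbb{Z}$ with $S_0=0$ and with $S_{n+1}-S_n\in\{-1,+1\}$, where \[ P(S_{n+1}-S_n=1\mid S_0,\dots,S_n)=p'\,1_{[S_n\in m\mathbb{Z}]}+p\,1_{[S_n\notin m\mathbb{Z}]} . \] Let $p^\ast_m$ denote the probability that this walk, started at $0$, reaches $m$ before it reaches $-m$ (equivalently, the constant probability of an up-step of the embedded walk $\{J_n\}$ on $m\mathbb{Z}$ described below). Then \[ p^\ast_m=\frac{p'p^{m-1}}{p'p^{m-1}+q'q^{m-1}} . \]
   Context: The walk in the claim is called the Parrondo game $G(m,p,p')$. Its embedded walk on the lattice $m\mathbb{Z}$ is defined via the times $T_0=0$, $T_1=\min\{n\ge 0: S_n\in m\mathbb{Z}\}$, $T_{k+1}=\min\{n>T_k: S_n-S_{T_k}=\pm m\}$ (minimum of the empty set is $+\infty$), and $J_n=m^{-1}S_{T_{n+1}}$; $\{J_n\}$ is a simple random walk on $\mathbb{Z}$ whose probability of a $+1$ step, $P(J_{n+1}-J_n=1\mid J_n)$, is the constant $p^\ast_m$. *)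

theory Defs
  imports "HOL-Probability.Probability"
begin

definition up_prob :: "nat \<Rightarrow> real \<Rightarrow> real \<Rightarrow> int \<Rightarrow> real" where
  "up_prob m p p' x = (if int m dvd x then p' else p)"

text \<open>Law of the path (S_0,...,S_n), stored as a reversed list
  (head = current position S_n, last = S_0 = 0).\<close>
fun walk_path :: "nat \<Rightarrow> real \<Rightarrow> real \<Rightarrow> nat \<Rightarrow> int list pmf" where
  "walk_path m p p' 0 = return_pmf [0]"
| "walk_path m p p' (Suc n) =
     bind_pmf (walk_path m p p' n)
       (\<lambda>xs. map_pmf (\<lambda>b. (if b then hd xs + 1 else hd xs - 1) # xs)
               (bernoulli_pmf (up_prob m p p' (hd xs))))"

definition reaches_m_first :: "nat \<Rightarrow> int list \<Rightarrow> bool" where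
  "reaches_m_first m ys \<longleftrightarrow>
     (\<exists>k < length ys. ys ! k = int m \<and> (\<forall>j<k. ys ! j \<noteq> - int m))"

text \<open>p*_m: probability that the walk started at 0 reaches m before -m,
  i.e. the probability of the increasing union over n of the events
  "reaches m before -m within n steps".\<close>
definition pstar :: "nat \<Rightarrow> real \<Rightarrow> real \<Rightarrow> real" where
  "pstar m p p' =
     (SUP n. measure_pmf.prob (walk_path m p p' n) {xs. reaches_m_first m (rev xs)})"

end

theory Submission imports Defs begin

type_synonym st = "bool \<times> bool \<times> int"

definition stp :: "nat \<Rightarrow> st \<Rightarrow> bool \<Rightarrow> st" where
"stp m s b = (case s of (r, nn, x) \<Rightarrow> let y = (if b then x + 1 else x - 1) in
   (r \<or> (y = int m \<and> nn), nn \<and> y \<noteq> - int m, y))"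

definition Kn :: "nat \<Rightarrow> real \<Rightarrow> real \<Rightarrow> st \<Rightarrow> st pmf" where
"Kn m p p' s = map_pmf (stp m s) (bernoulli_pmf (up_prob m p p' (snd (snd s))))"

fun mu :: "nat \<Rightarrow> real \<Rightarrow> real \<Rightarrow> nat \<Rightarrow> st pmf" where
  "mu m p p' 0 = return_pmf (False, True, 0)"
| "mu m p p' (Suc n) = bind_pmf (mu m p p' n) (Kn m p p')"

fun Kit :: "nat \<Rightarrow> real \<Rightarrow> real \<Rightarrow> nat \<Rightarrow> st \<Rightarrow> st pmf" where
  "Kit m p p' 0 s = return_pmf s"
| "Kit m p p' (Suc k) s = bind_pmf (Kit m p p' k s) (Kn m p p')"

definition Gs :: "nat \<Rightarrow> int list \<Rightarrow> st" where
"Gs m xs = (reaches_m_first m (rev xs), - int m \<notin> set xs, hd xs)"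

definition run :: "st \<Rightarrow> bool" where "run s = (\<not> fst s \<and> fst (snd s))"

definition good :: "nat \<Rightarrow> st \<Rightarrow> bool" where
"good m s = (run s \<longrightarrow> - int m < snd (snd s) \<and> snd (snd s) < int m)"

lemma ex_less_Suc_split: "(\<exists>k<Suc L. P k) = ((\<exists>k<L. P k) \<or> P L)"
  by (auto simp: less_Suc_eq)

lemma R_cons:
  "reaches_m_first m (rev xs @ [x]) \<longleftrightarrow>
     reaches_m_first m (rev xs) \<or> (x = int m \<and> - int m \<notin> set xs)"
proof -
  let ?L = "length xs"
  let ?ys = "rev xs @ [x]"
  let ?P = "\<lambda>k. ?ys ! k = int m \<and> (\<forall>j<k. ?ys ! j \<noteq> - int m)"
  have 1: "reaches_m_first m ?ys \<longleftrightarrow> (\<exists>k<Suc ?L. ?P k)"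
    unfolding reaches_m_first_def by simp
  have 2: "?P k \<longleftrightarrow> (rev xs ! k = int m \<and> (\<forall>j<k. rev xs ! j \<noteq> - int m))" if "k < ?L" for k
  proof -
    have "\<forall>j\<le>k. ?ys ! j = rev xs ! j" using that by (simp add: nth_append)
    then show ?thesis by auto
  qed
  have 3: "(\<exists>k<?L. ?P k) \<longleftrightarrow> reaches_m_first m (rev xs)"
    unfolding reaches_m_first_def length_rev using 2 by blast
  have 4: "(\<forall>j<?L. ?ys ! j \<noteq> - int m) \<longleftrightarrow> - int m \<notin> set (rev xs)"
  proof -
    have "(\<forall>j<?L. ?ys ! j \<noteq> - int m) \<longleftrightarrow> (\<forall>j<?L. rev xs ! j \<noteq> - int m)"
      by (simp add: nth_append)
    also have "\<dots> \<longleftrightarrow> - int m \<notin> set (rev xs)"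
      by (metis in_set_conv_nth length_rev)
    finally show ?thesis .
  qed
  have 5: "?ys ! ?L = x" by (simp add: nth_append)
  show ?thesis unfolding 1 ex_less_Suc_split 3 using 4 5 by simp
qed

lemma Gs_cons: "Gs m ((if b then hd xs + 1 else hd xs - 1) # xs) = stp m (Gs m xs) b"
  by (cases b) (auto simp: Gs_def stp_def R_cons Let_def)

lemma G_walk:
  assumes "m \<ge> 1"
  shows "map_pmf (Gs m) (walk_path m p p' n) = mu m p p' n"
proof (induction n)
  case 0
  have "Gs m [0] = (False, True, 0)"
    using assms by (simp add: Gs_def reaches_m_first_def)
  then show ?case by simp
next
  case (Suc n)
  have "map_pmf (Gs m) (walk_path m p p' (Suc n)) =
     bind_pmf (walk_path m p p' n) (\<lambda>xs. Kn m p p' (Gs m xs))"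
    unfolding walk_path.simps map_bind_pmf
  proof (rule bind_pmf_cong[OF refl])
    fix xs assume "xs \<in> set_pmf (walk_path m p p' n)"
    show "map_pmf (Gs m) (map_pmf (\<lambda>b. (if b then hd xs + 1 else hd xs - 1) # xs)
          (bernoulli_pmf (up_prob m p p' (hd xs)))) = Kn m p p' (Gs m xs)"
    proof -
      have h: "snd (snd (Gs m xs)) = hd xs" by (simp add: Gs_def)
      show ?thesis by (simp only: Kn_def pmf.map_comp o_def Gs_cons h)
    qed
  qed
  also have "\<dots> = mu m p p' (Suc n)"
    by (simp only: mu.simps Suc.IH[symmetric] bind_map_pmf)
  finally show ?case .
qed

lemma integrable_bdd:
  fixes f :: "'a \<Rightarrow> real"
  assumes "\<And>x. \<bar>f x\<bar> \<le> B"
  shows "integrable (measure_pmf M) f"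
  by (rule measure_pmf.integrable_const_bound[where B=B]) (auto simp: assms)

lemma integral_bind_pmf_bdd:
  fixes f :: "'b \<Rightarrow> real"
  assumes "\<And>x. \<bar>f x\<bar> \<le> B"
  shows "(\<integral>x. f x \<partial>bind_pmf M N) = (\<integral>x. (\<integral>y. f y \<partial>N x) \<partial>M)"
  unfolding measure_pmf_bind
  apply (rule integral_bind[where K="count_space UNIV" and B=B and B'=1])
  using assms measurable_measure_pmf[of N] by (auto simp: measure_pmf.emeasure_space_1)




definition dl :: "nat \<Rightarrow> real \<Rightarrow> real \<Rightarrow> nat \<Rightarrow> real" where
"dl m p p' j = (if j < m then p' * p ^ (m - 1) * (1 - p) ^ j * p ^ (m - 1 - j)
   else if j < 2 * m then (1 - p') * (1 - p) ^ (m - 1) * (1 - p) ^ (j - m) * p ^ (2 * m - 1 - j)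
   else 0)"

definition w :: "nat \<Rightarrow> real \<Rightarrow> real \<Rightarrow> nat \<Rightarrow> real" where
"w m p p' i = (\<Sum>j<i. dl m p p' j)"

definition V :: "nat \<Rightarrow> real \<Rightarrow> real \<Rightarrow> int \<Rightarrow> real" where
"V m p p' x = w m p p' (nat (x + int m))"

definition Uf :: "nat \<Rightarrow> real \<Rightarrow> real \<Rightarrow> st \<Rightarrow> real" where
"Uf m p p' s = (if fst s then w m p p' (2 * m) else if fst (snd s) then V m p p' (snd (snd s)) else 0)"

context
  fixes m :: nat and p p' :: real
  assumes m1: "m \<ge> 1" and p0: "0 \<le> p" and p1: "p \<le> 1" and p'0: "0 \<le> p'" and p'1: "p' \<le> 1"
    and pp': "\<bar>p - p'\<bar> < 1"
begin

lemma up_bounds: "0 \<le> up_prob m p p' x" "up_prob m p p' x \<le> 1"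
  using p0 p1 p'0 p'1 by (auto simp: up_prob_def)

lemma up_interior:
  assumes "- int m < x" "x < int m"
  shows "up_prob m p p' x = (if x = 0 then p' else p)"
proof -
  have "int m dvd x \<longleftrightarrow> x = 0"
  proof
    assume "int m dvd x"
    show "x = 0"
    proof (rule ccontr)
      assume "x \<noteq> 0"
      with \<open>int m dvd x\<close> have "\<bar>int m\<bar> \<le> \<bar>x\<bar>" by (rule dvd_imp_le_int[rotated])
      with assms show False by simp
    qed
  qed simp
  then show ?thesis by (simp add: up_prob_def)
qed

lemma inv_stp: "good m s \<Longrightarrow> good m (stp m s b)"
  by (cases s) (auto simp: good_def run_def stp_def Let_def)

lemma nonrun_stp: "\<not> run s \<Longrightarrow> \<not> run (stp m s b)"
  by (cases s) (auto simp: run_def stp_def Let_def)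

lemma inv_mu: "s \<in> set_pmf (mu m p p' n) \<Longrightarrow> good m s"
proof (induction n arbitrary: s)
  case 0
  then show ?case using m1 by (simp add: good_def run_def)
next
  case (Suc n)
  then show ?case by (auto simp: Kn_def intro: inv_stp)
qed

lemma nonrun_Kit: "\<not> run s \<Longrightarrow> t \<in> set_pmf (Kit m p p' k s) \<Longrightarrow> \<not> run t"
proof (induction k arbitrary: t)
  case 0
  then show ?case by simp
next
  case (Suc k)
  then show ?case by (auto simp: Kn_def dest: nonrun_stp)
qed

lemma mu_add: "mu m p p' (n + k) = bind_pmf (mu m p p' n) (Kit m p p' k)"
proof (induction k)
  case 0
  then show ?case by (simp add: bind_return_pmf')
next
  case (Suc k)
  then show ?case by (simp add: bind_assoc_pmf)
qed

lemma Kit_Suc': "Kit m p p' (Suc k) s = bind_pmf (Kn m p p' s) (Kit m p p' k)"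
proof (induction k)
  case 0
  then show ?case by (simp add: bind_return_pmf bind_return_pmf')
next
  case (Suc k)
  then show ?case by (simp add: bind_assoc_pmf)
qed

lemma dl_nonneg: "0 \<le> dl m p p' j"
  using p0 p1 p'0 p'1 by (auto simp: dl_def)

lemma w_mono: "i \<le> j \<Longrightarrow> w m p p' i \<le> w m p p' j"
  unfolding w_def by (rule sum_mono2) (auto simp: dl_nonneg)

lemma w_nonneg: "0 \<le> w m p p' i"
  unfolding w_def by (rule sum_nonneg) (auto simp: dl_nonneg)

lemma w_Suc: "w m p p' (Suc i) = w m p p' i + dl m p p' i"
  by (simp add: w_def)

lemma w_big: "2 * m \<le> i \<Longrightarrow> w m p p' i = w m p p' (2 * m)"
  unfolding w_def
  by (rule sum.mono_neutral_right) (auto simp: dl_def)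

lemma w_le_T: "w m p p' i \<le> w m p p' (2 * m)"
proof (cases "i \<le> 2 * m")
  case True then show ?thesis by (rule w_mono)
next
  case False
  then have "w m p p' i = w m p p' (2 * m)" by (intro w_big) simp
  then show ?thesis by simp
qed

lemma harm_dl:
  assumes "1 \<le> i" "i < 2 * m"
  shows "(if i = m then p' else p) * dl m p p' i = (1 - (if i = m then p' else p)) * dl m p p' (i - 1)"
proof -
  define B where "B = p' * p ^ (m - 1)"
  define A where "A = (1 - p') * (1 - p) ^ (m - 1)"
  consider "i < m" | "i = m" | "m < i" by linarith
  then show ?thesis
  proof cases
    case 1
    define j where "j = i - 1"
    define d where "d = m - i - 1"
    have j: "i = Suc j" "m = j + 2 + d" using 1 assms by (simp_all add: j_def d_def)
    have e1: "dl m p p' i = B * (1 - p) ^ Suc j * p ^ d"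
      using j by (simp add: dl_def B_def)
    have e2: "dl m p p' (i - 1) = B * (1 - p) ^ j * p ^ Suc d"
      using j by (simp add: dl_def B_def)
    show ?thesis using 1 unfolding e1 e2 by (simp add: power_Suc mult_ac)
  next
    case 2
    have e1: "dl m p p' i = A * p ^ (m - 1)"
      using 2 m1 by (simp add: dl_def A_def)
    have e2: "dl m p p' (i - 1) = B * (1 - p) ^ (m - 1)"
      using 2 m1 by (simp add: dl_def B_def)
    show ?thesis using 2 unfolding e1 e2 A_def B_def by (simp add: mult_ac)
  next
    case 3
    define j where "j = i - m - 1"
    define d where "d = 2 * m - i - 1"
    have j: "i = m + Suc j" "m = j + 2 + d" using 3 assms by (simp_all add: j_def d_def)
    have e1: "dl m p p' i = A * (1 - p) ^ Suc j * p ^ d"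
      using j by (simp add: dl_def A_def)
    have e2: "dl m p p' (i - 1) = A * (1 - p) ^ j * p ^ Suc d"
      using j by (simp add: dl_def A_def)
    show ?thesis using 3 unfolding e1 e2 by (simp add: power_Suc mult_ac)
  qed
qed

lemma V_m: "V m p p' (int m) = w m p p' (2 * m)"
proof -
  have "nat (int m + int m) = 2 * m" by simp
  then show ?thesis by (simp only: V_def)
qed

lemma V_negm: "V m p p' (- int m) = 0"
  by (simp add: V_def w_def)

lemma V_nonneg: "0 \<le> V m p p' x"
  by (simp add: V_def w_nonneg)

lemma V_le: "V m p p' x \<le> w m p p' (2 * m)"
  by (simp add: V_def w_le_T)

lemma harmV:
  assumes "- int m < x" "x < int m"
  shows "up_prob m p p' x * V m p p' (x + 1) + (1 - up_prob m p p' x) * V m p p' (x - 1) = V m p p' x"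
proof -
  define i where "i = nat (x + int m)"
  have i1: "1 \<le> i" "i < 2 * m" using assms unfolding i_def by linarith+
  have i2: "nat (x + 1 + int m) = Suc i" "nat (x - 1 + int m) = i - 1" using assms unfolding i_def by linarith+
  have i3: "(x = 0) \<longleftrightarrow> (i = m)" using assms unfolding i_def by linarith
  define u where "u = (if i = m then p' else p)"
  have u: "up_prob m p p' x = u" unfolding u_def using up_interior[OF assms] i3 by simp
  have h: "u * dl m p p' i = (1 - u) * dl m p p' (i - 1)" unfolding u_def by (rule harm_dl[OF i1])
  have wS: "w m p p' (Suc i) = w m p p' i + dl m p p' i" by (rule w_Suc)
  have wP: "w m p p' i = w m p p' (i - 1) + dl m p p' (i - 1)"
    using w_Suc[of "i - 1"] i1 by simp
  have "V m p p' (x + 1) = w m p p' (Suc i)" "V m p p' (x - 1) = w m p p' (i - 1)" "V m p p' x = w m p p' i"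
    unfolding V_def i2 i_def by simp_all
  then show ?thesis unfolding u using h wS wP by (simp add: algebra_simps)
qed

lemma Uf_bound: "\<bar>Uf m p p' s\<bar> \<le> w m p p' (2 * m)"
  using V_nonneg V_le w_nonneg by (simp add: Uf_def)

lemma Uf_K:
  assumes "good m s"
  shows "(\<integral>t. Uf m p p' t \<partial>Kn m p p' s) = Uf m p p' s"
proof -
  obtain r nn x where s: "s = (r, nn, x)" by (cases s)
  define u where "u = up_prob m p p' x"
  have u01: "0 \<le> u" "u \<le> 1" unfolding u_def by (rule up_bounds)+
  have "(\<integral>t. Uf m p p' t \<partial>Kn m p p' s) =
      Uf m p p' (stp m s True) * u + Uf m p p' (stp m s False) * (1 - u)"
    unfolding Kn_def s u_def using u01 unfolding u_def by simp
  also have "\<dots> = Uf m p p' s"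
  proof (cases "r")
    case True
    then show ?thesis by (simp add: s stp_def Uf_def Let_def algebra_simps)
  next
    case False
    show ?thesis
    proof (cases nn)
      case nn: True
      with False assms s have x: "- int m < x" "x < int m" by (auto simp: good_def run_def)
      have t: "Uf m p p' (stp m s True) = V m p p' (x + 1)"
        using False nn x V_m by (auto simp: s stp_def Uf_def Let_def)
      have f: "Uf m p p' (stp m s False) = V m p p' (x - 1)"
        using False nn x V_negm by (auto simp: s stp_def Uf_def Let_def)
      show ?thesis unfolding t f using harmV[OF x] False nn
        by (simp add: s Uf_def u_def algebra_simps)
    next
      case nn: False
      then show ?thesis using False by (simp add: s stp_def Uf_def Let_def)
    qed
  qed
  finally show ?thesis .
qed

lemma integral_return_pmf_real: "(\<integral>t. (f t :: real) \<partial>return_pmf a) = f a"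
  by (subst integral_measure_pmf_real[of "{a}"]) auto

lemma E_mu: "(\<integral>s. Uf m p p' s \<partial>mu m p p' n) = V m p p' 0"
proof (induction n)
  case 0
  then show ?case by (simp add: integral_return_pmf_real Uf_def)
next
  case (Suc n)
  have "(\<integral>s. Uf m p p' s \<partial>mu m p p' (Suc n)) =
      (\<integral>s. (\<integral>t. Uf m p p' t \<partial>Kn m p p' s) \<partial>mu m p p' n)"
    unfolding mu.simps by (rule integral_bind_pmf_bdd[OF Uf_bound])
  also have "\<dots> = (\<integral>s. Uf m p p' s \<partial>mu m p p' n)"
    by (rule integral_cong_AE) (auto simp: AE_measure_pmf_iff Uf_K inv_mu)
  finally show ?case using Suc by simp
qed

lemma prob_int: "measure_pmf.prob M A = (\<integral>x. indicator A x \<partial>measure_pmf M)"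
  by simp

lemma P_upper: "w m p p' (2 * m) * measure_pmf.prob (mu m p p' n) {s. fst s} \<le> V m p p' 0"
proof -
  have "w m p p' (2 * m) * measure_pmf.prob (mu m p p' n) {s. fst s} =
     (\<integral>s. w m p p' (2 * m) * indicator {s. fst s} s \<partial>mu m p p' n)"
    by simp
  also have "\<dots> \<le> (\<integral>s. Uf m p p' s \<partial>mu m p p' n)"
  proof (rule integral_mono)
    show "integrable (measure_pmf (mu m p p' n)) (\<lambda>s. w m p p' (2 * m) * indicator {s. fst s} s)"
      by (rule integrable_bdd[where B="w m p p' (2 * m)"]) (simp add: w_nonneg indicator_def)
    show "integrable (measure_pmf (mu m p p' n)) (Uf m p p')"
      by (rule integrable_bdd[OF Uf_bound])
    fix s show "w m p p' (2 * m) * indicator {s. fst s} s \<le> Uf m p p' s"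
      using V_nonneg by (simp add: Uf_def indicator_def)
  qed
  finally show ?thesis using E_mu by simp
qed

lemma P_lower: "V m p p' 0 \<le> w m p p' (2 * m) * measure_pmf.prob (mu m p p' n) {s. fst s}
   + w m p p' (2 * m) * measure_pmf.prob (mu m p p' n) {s. run s}"
proof -
  let ?T = "w m p p' (2 * m)"
  have i1: "integrable (measure_pmf (mu m p p' n)) (\<lambda>s. ?T * indicator {s. fst s} s)"
    by (rule integrable_bdd[where B="?T"]) (simp add: w_nonneg indicator_def)
  have i2: "integrable (measure_pmf (mu m p p' n)) (\<lambda>s. ?T * indicator {s. run s} s)"
    by (rule integrable_bdd[where B="?T"]) (simp add: w_nonneg indicator_def)
  have "V m p p' 0 = (\<integral>s. Uf m p p' s \<partial>mu m p p' n)" using E_mu by simp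
  also have "\<dots> \<le> (\<integral>s. ?T * indicator {s. fst s} s + ?T * indicator {s. run s} s \<partial>mu m p p' n)"
  proof (rule integral_mono)
    show "integrable (measure_pmf (mu m p p' n)) (Uf m p p')"
      by (rule integrable_bdd[OF Uf_bound])
    show "integrable (measure_pmf (mu m p p' n)) (\<lambda>s. ?T * indicator {s. fst s} s + ?T * indicator {s. run s} s)"
      using i1 i2 by (rule Bochner_Integration.integrable_add)
    fix s show "Uf m p p' s \<le> ?T * indicator {s. fst s} s + ?T * indicator {s. run s} s"
      using V_le w_nonneg by (simp add: Uf_def indicator_def run_def)
  qed
  also have "\<dots> = (\<integral>s. ?T * indicator {s. fst s} s \<partial>mu m p p' n) + (\<integral>s. ?T * indicator {s. run s} s \<partial>mu m p p' n)"
    using i1 i2 by (rule Bochner_Integration.integral_add)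
  also have "\<dots> = ?T * measure_pmf.prob (mu m p p' n) {s. fst s} + ?T * measure_pmf.prob (mu m p p' n) {s. run s}"
    by simp
  finally show ?thesis .
qed


lemma prob_bind: "measure_pmf.prob (bind_pmf M N) A = (\<integral>x. measure_pmf.prob (N x) A \<partial>M)"
proof -
  have b: "\<And>x. \<bar>indicator A x :: real\<bar> \<le> 1" by (simp add: indicator_def)
  show ?thesis using integral_bind_pmf_bdd[of "indicator A" 1 M N, OF b] by simp
qed

lemma prob_comp: "measure_pmf.prob M {t. \<not> run t} = 1 - measure_pmf.prob M {t. run t}"
proof -
  have "UNIV - {t. run t} = {t. \<not> run t}" by auto
  then show ?thesis using measure_pmf.prob_compl[of "{t. run t}" M] by simp
qed

lemma nonrun_prob0:
  assumes "\<not> run s" shows "measure_pmf.prob (Kit m p p' k s) {t. run t} = 0"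
proof -
  have "set_pmf (Kit m p p' k s) \<inter> {t. run t} = {}" using nonrun_Kit[OF assms] by blast
  then show ?thesis by (simp add: measure_pmf_zero_iff)
qed

lemma step_prob:
  "measure_pmf.prob (Kit m p p' (Suc k) s) A =
     measure_pmf.prob (Kit m p p' k (stp m s True)) A * up_prob m p p' (snd (snd s))
   + measure_pmf.prob (Kit m p p' k (stp m s False)) A * (1 - up_prob m p p' (snd (snd s)))"
  unfolding Kit_Suc' prob_bind Kn_def using up_bounds by simp

lemma escape_up:
  assumes c: "0 < c" "c \<le> p" "c \<le> p'"
  shows "good m s \<Longrightarrow> run s \<Longrightarrow> int m - snd (snd s) \<le> int k \<Longrightarrow>
    c ^ k \<le> measure_pmf.prob (Kit m p p' k s) {t. \<not> run t}"
proof (induction k arbitrary: s)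
  case 0
  then show ?case by (auto simp: good_def)
next
  case (Suc k)
  obtain r nn x where s: "s = (r, nn, x)" by (cases s)
  have rn: "\<not> r" "nn" using Suc.prems s by (auto simp: run_def)
  define u where "u = up_prob m p p' x"
  have u: "c \<le> u" "u \<le> 1" "0 \<le> u" using c up_bounds unfolding u_def up_prob_def by auto
  define t where "t = stp m s True"
  have tx: "snd (snd t) = x + 1" unfolding t_def s by (simp add: stp_def Let_def)
  have at: "c ^ k \<le> measure_pmf.prob (Kit m p p' k t) {t. \<not> run t}"
  proof (cases "run t")
    case True
    have "good m t" unfolding t_def using Suc.prems(1) by (rule inv_stp)
    moreover have "int m - snd (snd t) \<le> int k" using Suc.prems(3) s tx by simp
    ultimately show ?thesis using Suc.IH True by blast
  next
    case False
    have "c ^ k \<le> 1" using c p1 by (simp add: power_le_one)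
    then show ?thesis using nonrun_prob0[OF False] prob_comp by simp
  qed
  have "c ^ Suc k = c * c ^ k" by simp
  also have "\<dots> \<le> u * measure_pmf.prob (Kit m p p' k t) {t. \<not> run t}"
    using at u c by (intro mult_mono) auto
  also have "\<dots> \<le> measure_pmf.prob (Kit m p p' (Suc k) s) {t. \<not> run t}"
    unfolding step_prob using u by (simp add: s t_def u_def[symmetric] mult.commute)
  finally show ?case .
qed

lemma escape_down:
  assumes c: "0 < c" "c \<le> 1 - p" "c \<le> 1 - p'"
  shows "good m s \<Longrightarrow> run s \<Longrightarrow> snd (snd s) + int m \<le> int k \<Longrightarrow>
    c ^ k \<le> measure_pmf.prob (Kit m p p' k s) {t. \<not> run t}"
proof (induction k arbitrary: s)
  case 0
  then show ?case by (auto simp: good_def)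
next
  case (Suc k)
  obtain r nn x where s: "s = (r, nn, x)" by (cases s)
  have rn: "\<not> r" "nn" using Suc.prems s by (auto simp: run_def)
  define u where "u = up_prob m p p' x"
  have u: "c \<le> 1 - u" "u \<le> 1" "0 \<le> u" using c up_bounds unfolding u_def up_prob_def by auto
  define t where "t = stp m s False"
  have tx: "snd (snd t) = x - 1" unfolding t_def s by (simp add: stp_def Let_def)
  have at: "c ^ k \<le> measure_pmf.prob (Kit m p p' k t) {t. \<not> run t}"
  proof (cases "run t")
    case True
    have "good m t" unfolding t_def using Suc.prems(1) by (rule inv_stp)
    moreover have "snd (snd t) + int m \<le> int k" using Suc.prems(3) s tx by simp
    ultimately show ?thesis using Suc.IH True by blast
  next
    case False
    have "c ^ k \<le> 1" using c p0 by (simp add: power_le_one)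
    then show ?thesis using nonrun_prob0[OF False] prob_comp by simp
  qed
  have "c ^ Suc k = c * c ^ k" by simp
  also have "\<dots> \<le> (1 - u) * measure_pmf.prob (Kit m p p' k t) {t. \<not> run t}"
    using at u c by (intro mult_mono) auto
  also have "\<dots> \<le> measure_pmf.prob (Kit m p p' (Suc k) s) {t. \<not> run t}"
    unfolding step_prob using u by (simp add: s t_def u_def[symmetric] mult.commute)
  finally show ?case .
qed

lemma escape:
  obtains d where "0 < d" "d \<le> 1"
    "\<And>s. good m s \<Longrightarrow> run s \<Longrightarrow> d \<le> measure_pmf.prob (Kit m p p' (2 * m) s) {t. \<not> run t}"
proof (cases "0 < p \<and> 0 < p'")
  case True
  define c where "c = min p p'"
  have c: "0 < c" "c \<le> p" "c \<le> p'" "c \<le> 1" using True p1 unfolding c_def by auto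
  show ?thesis
  proof (rule that[of "c ^ (2 * m)"])
    show "0 < c ^ (2 * m)" using c by simp
    show "c ^ (2 * m) \<le> 1" using c by (simp add: power_le_one)
    fix s assume s: "good m s" "run s"
    then have "int m - snd (snd s) \<le> int (2 * m)" by (auto simp: good_def)
    then show "c ^ (2 * m) \<le> measure_pmf.prob (Kit m p p' (2 * m) s) {t. \<not> run t}"
      using escape_up[OF c(1-3) s] by blast
  qed
next
  case False
  have lt: "p < 1" "p' < 1" using False pp' p0 p'0 p1 p'1 by auto
  define c where "c = min (1 - p) (1 - p')"
  have c: "0 < c" "c \<le> 1 - p" "c \<le> 1 - p'" "c \<le> 1" using lt p0 unfolding c_def by auto
  show ?thesis
  proof (rule that[of "c ^ (2 * m)"])
    show "0 < c ^ (2 * m)" using c by simp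
    show "c ^ (2 * m) \<le> 1" using c by (simp add: power_le_one)
    fix s assume s: "good m s" "run s"
    then have "snd (snd s) + int m \<le> int (2 * m)" by (auto simp: good_def)
    then show "c ^ (2 * m) \<le> measure_pmf.prob (Kit m p p' (2 * m) s) {t. \<not> run t}"
      using escape_down[OF c(1-3) s] by blast
  qed
qed

lemma decay:
  assumes d: "d \<le> 1" "\<And>s. good m s \<Longrightarrow> run s \<Longrightarrow> d \<le> measure_pmf.prob (Kit m p p' k s) {t. \<not> run t}"
  shows "measure_pmf.prob (mu m p p' (n + k)) {t. run t} \<le> (1 - d) * measure_pmf.prob (mu m p p' n) {t. run t}"
proof -
  have "measure_pmf.prob (mu m p p' (n + k)) {t. run t} =
      (\<integral>s. measure_pmf.prob (Kit m p p' k s) {t. run t} \<partial>mu m p p' n)"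
    unfolding mu_add prob_bind ..
  also have "\<dots> \<le> (\<integral>s. (1 - d) * indicator {t. run t} s \<partial>mu m p p' n)"
  proof (rule integral_mono_AE)
    show "integrable (measure_pmf (mu m p p' n)) (\<lambda>s. measure_pmf.prob (Kit m p p' k s) {t. run t})"
      by (rule integrable_bdd[where B=1]) simp
    show "integrable (measure_pmf (mu m p p' n)) (\<lambda>s. (1 - d) * indicator {t. run t} s)"
      by (rule integrable_bdd[where B="\<bar>1 - d\<bar>"]) (simp add: indicator_def)
    show "AE s in measure_pmf (mu m p p' n). measure_pmf.prob (Kit m p p' k s) {t. run t} \<le> (1 - d) * indicator {t. run t} s"
      unfolding AE_measure_pmf_iff
    proof (intro ballI)
      fix s assume "s \<in> set_pmf (mu m p p' n)"
      then have iv: "good m s" by (rule inv_mu)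
      show "measure_pmf.prob (Kit m p p' k s) {t. run t} \<le> (1 - d) * indicator {t. run t} s"
      proof (cases "run s")
        case True
        then show ?thesis using d(2)[OF iv True] prob_comp[of "Kit m p p' k s"] by simp
      next
        case False
        then show ?thesis using nonrun_prob0[OF False] by simp
      qed
    qed
  qed
  also have "\<dots> = (1 - d) * measure_pmf.prob (mu m p p' n) {t. run t}" by simp
  finally show ?thesis .
qed

lemma run_small: "\<exists>n. measure_pmf.prob (mu m p p' n) {t. run t} < e" if e: "0 < e" for e
proof -
  obtain d where d: "0 < d" "d \<le> 1"
    "\<And>s. good m s \<Longrightarrow> run s \<Longrightarrow> d \<le> measure_pmf.prob (Kit m p p' (2 * m) s) {t. \<not> run t}"
    using escape by blast
  have g: "measure_pmf.prob (mu m p p' (2 * m * j)) {t. run t} \<le> (1 - d) ^ j" for j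
  proof (induction j)
    case 0
    then show ?case by simp
  next
    case (Suc j)
    have "measure_pmf.prob (mu m p p' (2 * m * Suc j)) {t. run t}
       = measure_pmf.prob (mu m p p' (2 * m * j + 2 * m)) {t. run t}" by (simp add: algebra_simps)
    also have "\<dots> \<le> (1 - d) * measure_pmf.prob (mu m p p' (2 * m * j)) {t. run t}"
      using d(2,3) by (rule decay)
    also have "\<dots> \<le> (1 - d) * (1 - d) ^ j"
      using Suc d by (intro mult_left_mono) auto
    finally show ?case by simp
  qed
  obtain j where "(1 - d) ^ j < e" using real_arch_pow_inv[OF e, of "1 - d"] d by auto
  then show ?thesis using g[of j] by (intro exI[of _ "2 * m * j"]) simp
qed


lemma w_add: "w m p p' (a + n) = w m p p' a + (\<Sum>j<n. dl m p p' (a + j))"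
  by (induction n) (simp_all add: w_def)

definition "SS = (\<Sum>j<m. (1 - p) ^ j * p ^ (m - 1 - j))"

lemma w_m: "w m p p' m = p' * p ^ (m - 1) * SS"
proof -
  have "w m p p' m = (\<Sum>j<m. p' * p ^ (m - 1) * ((1 - p) ^ j * p ^ (m - 1 - j)))"
    unfolding w_def by (rule sum.cong) (auto simp: dl_def mult.assoc)
  then show ?thesis by (simp add: SS_def sum_distrib_left)
qed

lemma w_2m: "w m p p' (2 * m) = p' * p ^ (m - 1) * SS + (1 - p') * (1 - p) ^ (m - 1) * SS"
proof -
  have "w m p p' (2 * m) = w m p p' (m + m)" by (simp add: mult_2)
  also have "\<dots> = w m p p' m + (\<Sum>j<m. dl m p p' (m + j))" by (rule w_add)
  also have "(\<Sum>j<m. dl m p p' (m + j)) = (\<Sum>j<m. (1 - p') * (1 - p) ^ (m - 1) * ((1 - p) ^ j * p ^ (m - 1 - j)))"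
  proof (rule sum.cong)
    fix j assume "j \<in> {..<m}"
    then have "\<not> m + j < m" "m + j < 2 * m" "m + j - m = j" "2 * m - 1 - (m + j) = m - 1 - j" by auto
    then show "dl m p p' (m + j) = (1 - p') * (1 - p) ^ (m - 1) * ((1 - p) ^ j * p ^ (m - 1 - j))"
      unfolding dl_def by (simp only: if_False if_True mult.assoc)
  qed simp
  finally show ?thesis by (simp add: w_m SS_def sum_distrib_left)
qed

lemma SS_pos: "0 < SS"
proof (cases "p = 0")
  case True
  show ?thesis unfolding SS_def
    by (rule sum_pos2[where i="m - 1"]) (use True m1 in auto)
next
  case False
  show ?thesis unfolding SS_def
    by (rule sum_pos2[where i=0]) (use False p0 p1 m1 in auto)
qed

lemma AB_pos: "0 < p' * p ^ (m - 1) + (1 - p') * (1 - p) ^ (m - 1)"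
proof (cases "0 < p \<and> 0 < p'")
  case True
  have "0 < p' * p ^ (m - 1)" using True by simp
  moreover have "0 \<le> (1 - p') * (1 - p) ^ (m - 1)" using p1 p'1 by simp
  ultimately show ?thesis by linarith
next
  case False
  have lt: "p < 1" "p' < 1" using False pp' p0 p'0 p1 p'1 by auto
  have "0 < (1 - p') * (1 - p) ^ (m - 1)" using lt by simp
  moreover have "0 \<le> p' * p ^ (m - 1)" using p0 p'0 by simp
  ultimately show ?thesis by linarith
qed

lemma main_sup:
  "(SUP n. measure_pmf.prob (mu m p p' n) {s. fst s}) = w m p p' m / w m p p' (2 * m)"
proof -
  let ?T = "w m p p' (2 * m)"
  let ?L = "w m p p' m / ?T"
  let ?P = "\<lambda>n. measure_pmf.prob (mu m p p' n) {s. fst s}"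
  have T: "0 < ?T" unfolding w_2m using SS_pos AB_pos
    by (metis distrib_right mult_pos_pos mult.commute)
  have V0: "V m p p' 0 = w m p p' m" by (simp add: V_def)
  have up: "?P n \<le> ?L" for n
    using P_upper[of n] T by (simp add: V0 pos_le_divide_eq mult.commute)
  have low: "?L \<le> ?P n + measure_pmf.prob (mu m p p' n) {t. run t}" for n
    using P_lower[of n] T by (simp add: V0 pos_divide_le_eq algebra_simps)
  have bdd: "bdd_above (range ?P)" using up by (intro bdd_aboveI) auto
  show ?thesis
  proof (rule antisym)
    show "(SUP n. ?P n) \<le> ?L" by (rule cSUP_least) (use up in auto)
    show "?L \<le> (SUP n. ?P n)"
    proof (rule field_le_epsilon)
      fix e :: real assume "0 < e"
      then obtain n where n: "measure_pmf.prob (mu m p p' n) {t. run t} < e" using run_small by blast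
      have "?P n \<le> (SUP n. ?P n)" by (rule cSUP_upper[OF UNIV_I bdd])
      then show "?L \<le> (SUP n. ?P n) + e" using low[of n] n by linarith
    qed
  qed
qed

lemma final:
  "pstar m p p' = p' * p ^ (m - 1) / (p' * p ^ (m - 1) + (1 - p') * (1 - p) ^ (m - 1))"
proof -
  have "pstar m p p' = (SUP n. measure_pmf.prob (mu m p p' n) {s. fst s})"
    unfolding pstar_def
  proof (rule SUP_cong[OF refl])
    fix n
    have "Gs m -` {s. fst s} = {xs. reaches_m_first m (rev xs)}" by (auto simp: Gs_def)
    then show "measure_pmf.prob (walk_path m p p' n) {xs. reaches_m_first m (rev xs)} =
        measure_pmf.prob (mu m p p' n) {s. fst s}"
      using G_walk[OF m1, of p p' n, symmetric] by simp
  qed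
  also have "\<dots> = w m p p' m / w m p p' (2 * m)" by (rule main_sup)
  also have "\<dots> = p' * p ^ (m - 1) / (p' * p ^ (m - 1) + (1 - p') * (1 - p) ^ (m - 1))"
    unfolding w_m w_2m using SS_pos by (simp add: distrib_right[symmetric])
  finally show ?thesis .
qed

end


theorem lemma2p1:
  fixes m :: nat and p p' :: real
  assumes "m \<ge> 1"
    and "0 \<le> p" "p \<le> 1" "0 \<le> p'" "p' \<le> 1"
    and "\<bar>p - p'\<bar> < 1"
  shows "pstar m p p' =
    p' * p ^ (m - 1) / (p' * p ^ (m - 1) + (1 - p') * (1 - p) ^ (m - 1))"
  by (rule final[OF assms])

end
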